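(* Let $h\ge 2$ be an integer and let $O$ be a finite set of next hops with $\delta=|O|$ and probability distribution $(p_o)_{o\in O}$, with entropy $H_O=\sum_{o\in O} p_o\log_2\frac{1}{p_o}$. Let $T$ be the complete binary trie of height $h$ whose $2^h$ leaves are labeled independently with next hop $o$ with probability $p_o$, let $D$ be the DAG obtained from $T$ by trie-folding, and let $V^j_D$ be the set of nodes of $D$ at level $j$. For $1\le j\le h$ put $\beta_j=\min\{\frac{H_O}{h-j}2^h+3,\,2^{h-j},\,\delta^{2^j}\}$ (with the first term $+\infty$ for $j=h$), let $k^*\in\{1,\dots,h\}$ be a level at which $\beta_j$ attains its maximum, and suppose each node of $D$ is stored using $2(h-k^* )$ bits. Then for every level $j=1,\dots,h$ the expected number of bits needed to store the nodes of $D$ at level $j$, namely $2(h-k^* )\,E(|V^j_D|)$, is at most \[\mathcal{M}=2 H_O 2^{h} + 6h.\]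
   Context: Levels: the level of a node of $T$ is $h$ minus its distance from the root; the root has level $h$, leaves level $0$, and level $j$ has $2^{h-j}$ nodes, each the root of a subtrie of height $j$ with $2^j$ labeled leaves. Trie-folding merges nodes whose rooted subtries are identical (same structure and same leaf next-hop labels), producing a DAG $D$; the nodes of $D$ at level $j$ correspond to the distinct leaf-label strings of length $2^j$ among the $2^{h-j}$ level-$j$ subtries. Each node of $D$ stores two child pointers of $h-k^*$ bits each. *)

theory Defs
  imports Complex_Main "HOL-Library.FuncSet"
begin

text \<open>Leaves of the complete binary trie of height h are indexed 0..<2^h (left to right).
A leaf labelling is an (extensional) function from leaf indices to next hops in Hops.\<close>

definition labelings :: "nat \<Rightarrow> 'a set \<Rightarrow> (nat \<Rightarrow> 'a) set" where
  "labelings h Hops = PiE {..<2^h} (\<lambda>_. Hops)"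

definition labeling_prob :: "nat \<Rightarrow> ('a \<Rightarrow> real) \<Rightarrow> (nat \<Rightarrow> 'a) \<Rightarrow> real" where
  "labeling_prob h p f = (\<Prod>i<2^h. p (f i))"

text \<open>Leaf-label string of the i-th subtrie at level j (leaves i*2^j ..< (i+1)*2^j).\<close>

definition subtrie_string :: "nat \<Rightarrow> (nat \<Rightarrow> 'a) \<Rightarrow> nat \<Rightarrow> 'a list" where
  "subtrie_string j f i = map f [i * 2^j ..< (i + 1) * 2^j]"

text \<open>Nodes of the folded DAG D at level j: distinct leaf-label strings of the 2^(h-j)
level-j subtries.\<close>

definition dag_level_nodes :: "nat \<Rightarrow> nat \<Rightarrow> (nat \<Rightarrow> 'a) \<Rightarrow> 'a list set" where
  "dag_level_nodes h j f = subtrie_string j f ` {..<2^(h-j)}"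

definition expected_level_size :: "nat \<Rightarrow> 'a set \<Rightarrow> ('a \<Rightarrow> real) \<Rightarrow> nat \<Rightarrow> real" where
  "expected_level_size h Hops p j =
     (\<Sum>f\<in>labelings h Hops. labeling_prob h p f * real (card (dag_level_nodes h j f)))"

definition entropy :: "'a set \<Rightarrow> ('a \<Rightarrow> real) \<Rightarrow> real" where
  "entropy Hops p = (\<Sum>x\<in>Hops. p x * log 2 (1 / p x))"

text \<open>beta_j; for j = h the first term is +infinity, so it is omitted from the min.\<close>

definition beta :: "nat \<Rightarrow> 'a set \<Rightarrow> ('a \<Rightarrow> real) \<Rightarrow> nat \<Rightarrow> real" where
  "beta h Hops p j =
     (if j = h then min (2 ^ (h - j)) (real (card Hops) ^ (2 ^ j))
      else min (entropy Hops p / real (h - j) * 2 ^ h + 3)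
               (min (2 ^ (h - j)) (real (card Hops) ^ (2 ^ j))))"

end

theory Submission imports Defs begin


definition LS :: "'a set \<Rightarrow> nat \<Rightarrow> 'a list set" where
  "LS A n = {xs. set xs \<subseteq> A \<and> length xs = n}"

lemma LS_Suc: "LS A (Suc n) = (\<lambda>(xs, x). x#xs) ` (LS A n \<times> A)"
  unfolding LS_def by (rule lists_length_Suc_eq)

lemma LS_finite: "finite A \<Longrightarrow> finite (LS A n)"
  unfolding LS_def by (rule finite_lists_length_eq)

lemma LS_0: "LS A 0 = {[]}" by (auto simp: LS_def)

lemma LS_sum_Suc:
  assumes "finite A"
  shows "(\<Sum>s\<in>LS A (Suc n). g s) = (\<Sum>xs\<in>LS A n. \<Sum>x\<in>A. g (x#xs))"
proof -
  have inj: "inj_on (\<lambda>(xs, x). x#xs) (LS A n \<times> A)" by (auto simp: inj_on_def)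
  have "(\<Sum>s\<in>LS A (Suc n). g s) = (\<Sum>q\<in>LS A n \<times> A. g ((\<lambda>(xs, x). x#xs) q))"
    unfolding LS_Suc by (rule sum.reindex[OF inj, unfolded comp_def])
  also have "\<dots> = (\<Sum>xs\<in>LS A n. \<Sum>x\<in>A. g (x#xs))"
    by (simp only: sum.cartesian_product) (simp add: split_def)
  finally show ?thesis .
qed

lemma LS_prob_sum:
  assumes "finite A" "(\<Sum>x\<in>A. p x) = (1::real)"
  shows "(\<Sum>s\<in>LS A n. prod_list (map p s)) = 1"
proof (induction n)
  case 0
  then show ?case by (simp add: LS_0)
next
  case (Suc n)
  have "(\<Sum>s\<in>LS A (Suc n). prod_list (map p s)) = (\<Sum>xs\<in>LS A n. \<Sum>x\<in>A. p x * prod_list (map p xs))"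
    by (subst LS_sum_Suc[OF assms(1)]) simp
  also have "\<dots> = (\<Sum>xs\<in>LS A n. prod_list (map p xs))"
    by (simp add: sum_distrib_right[symmetric] assms(2))
  finally show ?case using Suc by simp
qed

lemma LS_prob_pos:
  assumes "\<forall>x\<in>A. p x > (0::real)" "s \<in> LS A n"
  shows "prod_list (map p s) > 0"
  using assms unfolding LS_def by (induction s arbitrary: n) auto

lemma p_le1:
  assumes "finite A" "\<forall>x\<in>A. p x > (0::real)" "(\<Sum>x\<in>A. p x) = 1" "y \<in> A"
  shows "p y \<le> 1"
proof -
  have "p y \<le> (\<Sum>x\<in>A. p x)"
    using assms by (intro member_le_sum) auto
  then show ?thesis using assms by simp
qed

lemma LS_prob_le1:
  assumes "finite A" "\<forall>x\<in>A. p x > (0::real)" "(\<Sum>x\<in>A. p x) = 1" "s \<in> LS A n"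
  shows "prod_list (map p s) \<le> 1"
  using assms(4) unfolding LS_def
proof (induction s arbitrary: n)
  case Nil then show ?case by simp
next
  case (Cons a s)
  have "p a \<le> 1" "p a \<ge> 0" using p_le1[OF assms(1-3)] Cons.prems assms(2) by force+
  moreover have "prod_list (map p s) \<le> 1" using Cons by auto
  moreover have "prod_list (map p s) \<ge> 0" using Cons.prems assms(2)
    by (intro less_imp_le LS_prob_pos[of A p s "length s"]) (auto simp: LS_def)
  ultimately show ?case by (simp add: mult_le_one)
qed

lemma LS_entropy:
  assumes "finite A" "\<forall>x\<in>A. p x > (0::real)" "(\<Sum>x\<in>A. p x) = 1"
  shows "(\<Sum>s\<in>LS A n. prod_list (map p s) * log 2 (1 / prod_list (map p s))) = n * entropy A p"
proof (induction n)
  case 0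
  then show ?case by (simp add: LS_0)
next
  case (Suc n)
  let ?P = "\<lambda>s. prod_list (map p s)"
  have "(\<Sum>s\<in>LS A (Suc n). ?P s * log 2 (1 / ?P s))
      = (\<Sum>xs\<in>LS A n. \<Sum>x\<in>A. p x * ?P xs * log 2 (1 / (p x * ?P xs)))"
    by (subst LS_sum_Suc[OF assms(1)]) simp
  also have "\<dots> = (\<Sum>xs\<in>LS A n. \<Sum>x\<in>A. ?P xs * (p x * log 2 (1 / p x)) + p x * (?P xs * log 2 (1 / ?P xs)))"
  proof (intro sum.cong refl)
    fix xs x assume xs: "xs \<in> LS A n" and x: "x \<in> A"
    have a: "p x > 0" using x assms by auto
    have b: "?P xs > 0" using LS_prob_pos[OF assms(2) xs] .
    have "log 2 (1 / (p x * ?P xs)) = log 2 (1 / p x) + log 2 (1 / ?P xs)"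
      using a b by (simp add: log_divide log_mult)
    then show "p x * ?P xs * log 2 (1 / (p x * ?P xs)) = ?P xs * (p x * log 2 (1 / p x)) + p x * (?P xs * log 2 (1 / ?P xs))"
      by (simp add: algebra_simps)
  qed
  also have "\<dots> = (\<Sum>xs\<in>LS A n. ?P xs * entropy A p + ?P xs * log 2 (1 / ?P xs))"
    by (simp add: sum.distrib sum_distrib_left[symmetric] sum_distrib_right[symmetric] assms(3) entropy_def)
  also have "\<dots> = entropy A p + n * entropy A p"
    by (simp add: sum.distrib sum_distrib_right[symmetric] LS_prob_sum[OF assms(1,3)] Suc)
  finally show ?case by (simp add: algebra_simps)
qed

lemma min_log_bound:
  fixes x m :: real
  assumes "x \<ge> 1" "m \<ge> 2"
  shows "min x m \<le> m * log 2 x / log 2 m + 3"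
proof -
  have lm: "log 2 m > 0" using assms by simp
  have lx: "log 2 x \<ge> 0" using assms by simp
  have nn: "m * log 2 x / log 2 m \<ge> 0" using lm lx assms by simp
  consider "x \<ge> m" | "x \<le> 3" | "3 < x" "x < m" by linarith
  then show ?thesis
  proof cases
    case 1
    then have "log 2 x \<ge> log 2 m" using assms by simp
    then have "m * log 2 x / log 2 m \<ge> m" using lm assms by (simp add: field_simps)
    then show ?thesis using 1 by linarith
  next
    case 2 then show ?thesis using nn by linarith
  next
    case 3
    have e: "exp 1 \<le> x" using 3 exp_le by linarith
    have "ln m / m \<le> ln x / x" using ln_x_over_x_mono[OF e] 3 by simp
    then have "x * ln m \<le> m * ln x" using 3 assms by (simp add: field_simps)
    then have "x \<le> m * ln x / ln m" using assms by (simp add: field_simps)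
    also have "m * ln x / ln m = m * log 2 x / log 2 m" by (simp add: log_def)
    finally show ?thesis by linarith
  qed
qed

lemma LS_min_bound:
  assumes "finite A" "\<forall>x\<in>A. p x > (0::real)" "(\<Sum>x\<in>A. p x) = 1" "m \<ge> 2"
  shows "(\<Sum>s\<in>LS A n. min 1 (m * prod_list (map p s))) \<le> m * (n * entropy A p) / log 2 m + 3"
proof -
  let ?P = "\<lambda>s. prod_list (map p s)"
  have "(\<Sum>s\<in>LS A n. min 1 (m * ?P s)) \<le> (\<Sum>s\<in>LS A n. ?P s * (m / log 2 m) * log 2 (1 / ?P s) + 3 * ?P s)"
  proof (intro sum_mono)
    fix s assume s: "s \<in> LS A n"
    have a: "?P s > 0" using LS_prob_pos[OF assms(2) s] .
    have b: "?P s \<le> 1" using LS_prob_le1[OF assms(1-3) s] .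
    have "min 1 (m * ?P s) = ?P s * min (1 / ?P s) m" using a
      by (simp add: min_def field_simps)
    also have "\<dots> \<le> ?P s * (m * log 2 (1 / ?P s) / log 2 m + 3)"
      using min_log_bound[of "1 / ?P s" m] a b assms(4)
      by (intro mult_left_mono) (auto simp: field_simps)
    finally show "min 1 (m * ?P s) \<le> ?P s * (m / log 2 m) * log 2 (1 / ?P s) + 3 * ?P s"
      by (simp add: algebra_simps)
  qed
  also have "\<dots> = (m / log 2 m) * (\<Sum>s\<in>LS A n. ?P s * log 2 (1 / ?P s)) + 3 * (\<Sum>s\<in>LS A n. ?P s)"
    by (simp add: sum.distrib sum_distrib_left algebra_simps)
  also have "\<dots> = m * (n * entropy A p) / log 2 m + 3"
    by (simp add: LS_entropy[OF assms(1-3)] LS_prob_sum[OF assms(1,3)])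
  finally show ?thesis .
qed



lemma w_nonneg:
  assumes "\<forall>x\<in>A. p x > (0::real)" "f \<in> labelings h A"
  shows "labeling_prob h p f \<ge> 0"
  using assms unfolding labeling_prob_def labelings_def
  by (intro prod_nonneg) (auto simp: PiE_def Pi_def less_imp_le)

lemma w_total:
  assumes "finite A" "(\<Sum>x\<in>A. p x) = (1::real)"
  shows "(\<Sum>f\<in>labelings h A. labeling_prob h p f) = 1"
proof -
  have "(\<Prod>x\<in>{..<(2::nat)^h}. \<Sum>y\<in>A. p y) = (\<Sum>g\<in>PiE {..<(2::nat)^h} (\<lambda>_. A). \<Prod>x\<in>{..<(2::nat)^h}. p (g x))"
    using assms by (intro prod_sum_PiE) auto
  then show ?thesis using assms(2) by (simp add: labelings_def labeling_prob_def)
qed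

lemma prod_01:
  assumes "finite A"
  shows "(\<Prod>x\<in>A. (if P x then 0 else 1::real)) = (if \<exists>x\<in>A. P x then 0 else 1)"
  using assms by (induction A rule: finite_induct) auto

lemma string_eq_iff:
  assumes "length s = 2^j"
  shows "(subtrie_string j f i = s) \<longleftrightarrow> (\<forall>x\<in>{i*2^j..<(i+1)*2^j}. f x = s ! (x - i*2^j))"
proof -
  have "(subtrie_string j f i = s) \<longleftrightarrow> (\<forall>k<2^j. f (i*2^j + k) = s ! k)"
    using assms unfolding subtrie_string_def
    by (auto simp: list_eq_iff_nth_eq nth_upt)
  also have "\<dots> \<longleftrightarrow> (\<forall>x\<in>{i*2^j..<(i+1)*2^j}. f x = s ! (x - i*2^j))"
  proof
    assume H: "\<forall>k<2^j. f (i*2^j + k) = s ! k"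
    show "\<forall>x\<in>{i*2^j..<(i+1)*2^j}. f x = s ! (x - i*2^j)"
    proof
      fix x assume "x \<in> {i*2^j..<(i+1)*2^j}"
      then have "x - i*2^j < 2^j" "x = i*2^j + (x - i*2^j)" by auto
      then show "f x = s ! (x - i*2^j)" using H by metis
    qed
  next
    assume H: "\<forall>x\<in>{i*2^j..<(i+1)*2^j}. f x = s ! (x - i*2^j)"
    show "\<forall>k<2^j. f (i*2^j + k) = s ! k"
    proof (intro allI impI)
      fix k :: nat assume "k < 2^j"
      then have "i*2^j + k \<in> {i*2^j..<(i+1)*2^j}" by auto
      then show "f (i*2^j + k) = s ! k" using H by fastforce
    qed
  qed
  finally show ?thesis .
qed

lemma marg:
  assumes fin: "finite A" and s1: "(\<Sum>x\<in>A. p x) = (1::real)" and jh: "j \<le> h"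
    and im: "i < 2^(h-j)" and s: "s \<in> LS A (2^j)"
  shows "(\<Sum>f\<in>labelings h A. labeling_prob h p f * (if subtrie_string j f i = s then 1 else 0))
         = prod_list (map p s)"
proof -
  define n :: nat where "n = 2^j"
  define N :: nat where "N = 2^h"
  define B where "B = {i*n..<(i+1)*n}"
  have BN: "B \<subseteq> {..<N}"
  proof -
    have "(i+1)*n \<le> 2^(h-j) * 2^j" unfolding n_def using im by (intro mult_right_mono) auto
    also have "\<dots> = N" unfolding N_def using jh by (simp add: power_add[symmetric])
    finally show ?thesis unfolding B_def by auto
  qed
  have ls: "length s = n" and sA: "set s \<subseteq> A" using s by (auto simp: LS_def n_def)
  define c where "c x = s ! (x - i*n)" for x
  have cA: "c x \<in> A" if "x \<in> B" for x
  proof -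
    have "x - i*n < n" using that by (auto simp: B_def)
    then show ?thesis using sA ls unfolding c_def by (auto simp: set_conv_nth)
  qed
  define q where "q x y = p y * (if x \<in> B \<and> y \<noteq> c x then 0 else 1)" for x y
  have eq1: "labeling_prob h p f * (if subtrie_string j f i = s then 1 else 0) = (\<Prod>x\<in>{..<N}. q x (f x))" for f
  proof -
    have "(if subtrie_string j f i = s then 1 else 0) = (if \<exists>x\<in>{..<N}. x \<in> B \<and> f x \<noteq> c x then 0 else (1::real))"
      using string_eq_iff[of s j f i] ls BN unfolding n_def B_def c_def by auto
    also have "\<dots> = (\<Prod>x\<in>{..<N}. (if x \<in> B \<and> f x \<noteq> c x then 0 else 1))"
      by (rule prod_01[symmetric]) simp
    finally show ?thesis unfolding q_def labeling_prob_def N_def by (simp add: prod.distrib)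
  qed
  have "(\<Sum>f\<in>labelings h A. labeling_prob h p f * (if subtrie_string j f i = s then 1 else 0))
      = (\<Sum>f\<in>PiE {..<N} (\<lambda>_. A). \<Prod>x\<in>{..<N}. q x (f x))"
    unfolding labelings_def N_def using eq1 N_def by simp
  also have "\<dots> = (\<Prod>x\<in>{..<N}. \<Sum>y\<in>A. q x y)"
    using fin by (intro prod_sum_PiE[symmetric]) auto
  also have "\<dots> = (\<Prod>x\<in>{..<N}. if x \<in> B then p (c x) else 1)"
  proof (intro prod.cong refl)
    fix x assume "x \<in> {..<N}"
    show "(\<Sum>y\<in>A. q x y) = (if x \<in> B then p (c x) else 1)"
    proof (cases "x \<in> B")
      case True
      then have "(\<Sum>y\<in>A. q x y) = (\<Sum>y\<in>A. if y = c x then p y else 0)"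
        unfolding q_def by (intro sum.cong) auto
      also have "\<dots> = p (c x)" using cA[OF True] fin by (simp add: sum.delta')
      finally show ?thesis using True by simp
    next
      case False then show ?thesis unfolding q_def using s1 by simp
    qed
  qed
  also have "\<dots> = (\<Prod>x\<in>{..<N} \<inter> B. p (c x))"
    by (rule prod.inter_restrict[symmetric]) simp
  also have "{..<N} \<inter> B = B" using BN by auto
  also have "(\<Prod>x\<in>B. p (c x)) = (\<Prod>k\<in>{0..<n}. p (s ! k))"
  proof -
    have Beq: "B = (\<lambda>k. k + i*n) ` {0..<n}" unfolding B_def
      by (auto simp: image_iff intro!: bexI[where x="_ - i*n"])
    have inj: "inj_on (\<lambda>k. k + i*n) {0..<n}" by (auto simp: inj_on_def)
    show ?thesis by (subst Beq, subst prod.reindex[OF inj]) (simp add: c_def)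
  qed
  also have "\<dots> = prod_list (map p s)"
    using ls by (simp add: prod.list_conv_set_nth)
  finally show ?thesis .
qed



lemma img_sub:
  assumes "f \<in> labelings h A" "j \<le> h"
  shows "dag_level_nodes h j f \<subseteq> LS A (2^j)"
proof
  fix s assume "s \<in> dag_level_nodes h j f"
  then obtain i where i: "i < 2^(h-j)" and s: "s = subtrie_string j f i"
    unfolding dag_level_nodes_def by auto
  have "(i+1)*2^j \<le> 2^(h-j) * (2::nat)^j" using i by (intro mult_right_mono) auto
  also have "\<dots> = 2^h" using assms(2) by (simp add: power_add[symmetric])
  finally have le: "(i+1)*2^j \<le> (2::nat)^h" .
  have "set s \<subseteq> A"
  proof
    fix y assume "y \<in> set s"
    then obtain x where "x \<in> {i*2^j..<(i+1)*2^j}" "y = f x" unfolding s subtrie_string_def by auto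
    then have "x < 2^h" "y = f x" using le by auto
    then show "y \<in> A" using assms(1) unfolding labelings_def by auto
  qed
  then show "s \<in> LS A (2^j)" unfolding LS_def s subtrie_string_def by simp
qed

lemma card_bound:
  assumes fin: "finite A" and f: "f \<in> labelings h A" and jh: "j \<le> h"
  shows "real (card (dag_level_nodes h j f)) \<le>
    (\<Sum>s\<in>LS A (2^j). min 1 (\<Sum>i<2^(h-j). (if subtrie_string j f i = s then 1 else 0::real)))"
proof -
  let ?I = "dag_level_nodes h j f"
  have sub: "?I \<subseteq> LS A (2^j)" by (rule img_sub[OF f jh])
  have "real (card ?I) = real (card (LS A (2^j) \<inter> ?I))" using sub by (simp add: Int_absorb1)
  also have "\<dots> = (\<Sum>s\<in>LS A (2^j) \<inter> ?I. 1::real)" by simp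
  also have "\<dots> = (\<Sum>s\<in>LS A (2^j). if s \<in> ?I then 1 else 0)"
    by (rule sum.inter_restrict) (rule LS_finite[OF fin])
  also have "\<dots> \<le> (\<Sum>s\<in>LS A (2^j). min 1 (\<Sum>i<2^(h-j). (if subtrie_string j f i = s then 1 else 0::real)))"
  proof (intro sum_mono)
    fix s assume "s \<in> LS A (2^j)"
    show "(if s \<in> ?I then 1 else 0) \<le> min 1 (\<Sum>i<2^(h-j). (if subtrie_string j f i = s then 1 else 0::real))"
    proof (cases "s \<in> ?I")
      case True
      then obtain i where i: "i < 2^(h-j)" "subtrie_string j f i = s"
        unfolding dag_level_nodes_def by auto
      have "(if subtrie_string j f i = s then 1 else 0::real) \<le> (\<Sum>i<2^(h-j). (if subtrie_string j f i = s then 1 else 0::real))"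
        using i by (intro member_le_sum) auto
      then show ?thesis using True i by simp
    next
      case False
      have "0 \<le> (\<Sum>i<2^(h-j). (if subtrie_string j f i = s then 1 else 0::real))"
        by (intro sum_nonneg) auto
      then show ?thesis using False by simp
    qed
  qed
  finally show ?thesis .
qed

lemma E_union_bound:
  assumes fin: "finite A" and pos: "\<forall>x\<in>A. p x > (0::real)" and s1: "(\<Sum>x\<in>A. p x) = 1"
    and jh: "j \<le> h"
  shows "expected_level_size h A p j \<le> (\<Sum>s\<in>LS A (2^j). min 1 (2^(h-j) * prod_list (map p s)))"
proof -
  let ?w = "labeling_prob h p"
  let ?c = "\<lambda>f s. (\<Sum>i<2^(h-j). (if subtrie_string j f i = s then 1 else 0::real))"
  have finL: "finite (labelings h A)" unfolding labelings_def using fin by (simp add: finite_PiE)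
  have "expected_level_size h A p j \<le> (\<Sum>f\<in>labelings h A. ?w f * (\<Sum>s\<in>LS A (2^j). min 1 (?c f s)))"
    unfolding expected_level_size_def
    by (intro sum_mono mult_left_mono card_bound[OF fin _ jh] w_nonneg[OF pos]) auto
  also have "\<dots> = (\<Sum>s\<in>LS A (2^j). \<Sum>f\<in>labelings h A. ?w f * min 1 (?c f s))"
    by (simp add: sum_distrib_left sum.swap[of _ "labelings h A"])
  also have "\<dots> \<le> (\<Sum>s\<in>LS A (2^j). min 1 (2^(h-j) * prod_list (map p s)))"
  proof (intro sum_mono)
    fix s assume s: "s \<in> LS A (2^j)"
    have a: "(\<Sum>f\<in>labelings h A. ?w f * min 1 (?c f s)) \<le> (\<Sum>f\<in>labelings h A. ?w f * 1)"
      by (intro sum_mono mult_left_mono w_nonneg[OF pos]) auto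
    have b: "(\<Sum>f\<in>labelings h A. ?w f * min 1 (?c f s)) \<le> (\<Sum>f\<in>labelings h A. ?w f * ?c f s)"
      by (intro sum_mono mult_left_mono w_nonneg[OF pos]) auto
    have "(\<Sum>f\<in>labelings h A. ?w f * ?c f s) = (\<Sum>i<2^(h-j). \<Sum>f\<in>labelings h A. ?w f * (if subtrie_string j f i = s then 1 else 0))"
      by (simp add: sum_distrib_left sum.swap[of _ "labelings h A"])
    also have "\<dots> = (\<Sum>i<(2::nat)^(h-j). prod_list (map p s))"
      by (intro sum.cong refl marg[OF fin s1 jh _ s]) auto
    also have "\<dots> = 2^(h-j) * prod_list (map p s)" by simp
    finally have b': "(\<Sum>f\<in>labelings h A. ?w f * min 1 (?c f s)) \<le> 2^(h-j) * prod_list (map p s)"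
      using b by simp
    show "(\<Sum>f\<in>labelings h A. ?w f * min 1 (?c f s)) \<le> min 1 (2^(h-j) * prod_list (map p s))"
      using a b' w_total[OF fin s1, of h] by simp
  qed
  finally show ?thesis .
qed

lemma E_const_bound:
  assumes fin: "finite A" and pos: "\<forall>x\<in>A. p x > (0::real)" and s1: "(\<Sum>x\<in>A. p x) = 1"
    and b: "\<And>f. f \<in> labelings h A \<Longrightarrow> real (card (dag_level_nodes h j f)) \<le> b"
  shows "expected_level_size h A p j \<le> b"
proof -
  have "expected_level_size h A p j \<le> (\<Sum>f\<in>labelings h A. labeling_prob h p f * b)"
    unfolding expected_level_size_def
    by (intro sum_mono mult_left_mono b w_nonneg[OF pos]) auto
  also have "\<dots> = b" using w_total[OF fin s1, of h] by (simp add: sum_distrib_right[symmetric])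
  finally show ?thesis .
qed

lemma E_le_beta:
  assumes fin: "finite A" and ne: "A \<noteq> {}" and pos: "\<forall>x\<in>A. p x > (0::real)" and s1: "(\<Sum>x\<in>A. p x) = 1"
    and jh: "j \<le> h"
  shows "expected_level_size h A p j \<le> beta h A p j"
proof -
  have b1: "expected_level_size h A p j \<le> 2^(h-j)"
  proof (rule E_const_bound[OF fin pos s1])
    fix f
    have "card (dag_level_nodes h j f) \<le> card {..<(2::nat)^(h-j)}"
      unfolding dag_level_nodes_def by (rule card_image_le) simp
    then show "real (card (dag_level_nodes h j f)) \<le> 2^(h-j)"
      by (metis card_lessThan of_nat_le_iff of_nat_numeral of_nat_power)
  qed
  have b2: "expected_level_size h A p j \<le> real (card A) ^ (2^j)"
  proof (rule E_const_bound[OF fin pos s1])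
    fix f assume f: "f \<in> labelings h A"
    have "card (dag_level_nodes h j f) \<le> card (LS A (2^j))"
      by (rule card_mono[OF LS_finite[OF fin] img_sub[OF f jh]])
    also have "\<dots> = card A ^ (2^j)" unfolding LS_def by (rule card_lists_length_eq[OF fin])
    finally show "real (card (dag_level_nodes h j f)) \<le> real (card A) ^ (2^j)"
      by (metis of_nat_le_iff of_nat_power)
  qed
  show ?thesis
  proof (cases "j = h")
    case True then show ?thesis using b1 b2 unfolding beta_def by simp
  next
    case False
    then have jlt: "j < h" using jh by simp
    have m2: "(2::real)^(h-j) \<ge> 2"
    proof -
      have "(2::real)^1 \<le> 2^(h-j)" using jlt by (intro power_increasing) auto
      then show ?thesis by simp
    qed
    have "expected_level_size h A p j \<le> 2^(h-j) * (real (2^j) * entropy A p) / log 2 (2^(h-j)) + 3"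
      using order_trans[OF E_union_bound[OF fin pos s1 jh] LS_min_bound[OF fin pos s1 m2]] .
    also have "\<dots> = entropy A p / real (h - j) * 2 ^ h + 3"
    proof -
      have "log 2 ((2::real)^(h-j)) = real (h-j)" by (simp add: log_nat_power)
      moreover have "(2::real)^(h-j) * 2^j = 2^h" using jh by (simp add: power_add[symmetric])
      ultimately show ?thesis by (simp add: field_simps)
    qed
    finally show ?thesis using b1 b2 False unfolding beta_def by simp
  qed
qed



theorem corollary1:
  fixes h :: nat and Hops :: "'a set" and p :: "'a \<Rightarrow> real" and kstar :: nat
  assumes "h \<ge> 2"
    and "finite Hops" and "Hops \<noteq> {}"
    and "\<forall>x\<in>Hops. p x > 0" and "(\<Sum>x\<in>Hops. p x) = 1"
    and "kstar \<in> {1..h}"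
    and "\<forall>j\<in>{1..h}. beta h Hops p j \<le> beta h Hops p kstar"
  shows "\<forall>j\<in>{1..h}. 2 * real (h - kstar) * expected_level_size h Hops p j
           \<le> 2 * entropy Hops p * 2 ^ h + 6 * real h"
proof
  fix j assume j: "j \<in> {1..h}"
  have Hnn: "entropy Hops p \<ge> 0"
    unfolding entropy_def
  proof (intro sum_nonneg)
    fix x assume x: "x \<in> Hops"
    have "p x > 0" "p x \<le> 1" using assms(4) x p_le1[OF assms(2,4,5) x] by auto
    then show "p x * log 2 (1 / p x) \<ge> 0" by simp
  qed
  have E: "expected_level_size h Hops p j \<le> beta h Hops p kstar"
    using E_le_beta[OF assms(2-5), of j h] j assms(7) by (meson atLeastAtMost_iff order_trans)
  show "2 * real (h - kstar) * expected_level_size h Hops p j \<le> 2 * entropy Hops p * 2 ^ h + 6 * real h"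
  proof (cases "kstar = h")
    case True then show ?thesis using Hnn by simp
  next
    case False
    then have hk: "real (h - kstar) > 0" using assms(6) by auto
    have "beta h Hops p kstar \<le> entropy Hops p / real (h - kstar) * 2 ^ h + 3"
      using False unfolding beta_def by simp
    then have "expected_level_size h Hops p j \<le> entropy Hops p / real (h - kstar) * 2 ^ h + 3"
      by (rule order_trans[OF E])
    then have "real (h - kstar) * expected_level_size h Hops p j \<le>
        real (h - kstar) * (entropy Hops p / real (h - kstar) * 2 ^ h + 3)"
      using hk by (intro mult_left_mono) auto
    also have "\<dots> = entropy Hops p * 2 ^ h + 3 * real (h - kstar)" using hk by (simp add: field_simps)
    also have "\<dots> \<le> entropy Hops p * 2 ^ h + 3 * real h" by simp
    finally show ?thesis by linarith
  qed
qed


end
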